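(* Let $H$ be a Hilbert space and let $T$ be a densely defined closed operator on $H$ which is quasinormal and EP. Then $w(T^{n}) = (w(T))^{n}$ for all $n \in \mathbb{N}$.
   Context: For a densely defined closed operator $A$ from $D(A)\subset H$ into a Hilbert space $K$, $A^{*}$ is its adjoint, $N(A)$ its null space, $R(A)$ its range, and $C(A)=D(A)\cap N(A)^{\perp}$. When $R(A)$ is closed, the Moore–Penrose inverse $A^{\dagger}$ is the operator defined on $R(A)\oplus^{\perp}R(A)^{\perp}$ by $A^{\dagger}y=(A|_{C(A)})^{-1}y$ for $y\in R(A)$ and $A^{\dagger}y=0$ for $y\in R(A)^{\perp}$; it is bounded. The generalized Cauchy dual of $A$ is $w(A)=A(A^{*}A)^{\dagger}$ (products of unbounded operators taken on their natural domains). A densely defined closed operator $T$ on $H$ is EP if $R(T)$ is closed and $R(T)=R(T^{*})$. It is quasinormal if $T(T^{*}T)=(T^{*}T)T$ (equality of operators including domains). *)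

theory Defs
  imports "HOL-Analysis.Analysis"
begin

text \<open>Possibly unbounded linear operators from H to K are represented by their graphs,
  i.e. subsets of H \<times> K. Products of operators are taken on their natural domains,
  which is automatic for graph composition.\<close>

type_synonym ('a, 'b) lop = "('a \<times> 'b) set"

definition is_operator :: "('a::real_vector, 'b::real_vector) lop \<Rightarrow> bool" where
  "is_operator G \<longleftrightarrow> subspace G \<and> (\<forall>x y z. (x, y) \<in> G \<longrightarrow> (x, z) \<in> G \<longrightarrow> y = z)"

definition op_dom :: "('a, 'b) lop \<Rightarrow> 'a set" where
  "op_dom G = fst ` G"

definition op_range :: "('a, 'b) lop \<Rightarrow> 'b set" where
  "op_range G = snd ` G"

definition op_null :: "('a, 'b::zero) lop \<Rightarrow> 'a set" where
  "op_null G = {x. (x, 0) \<in> G}"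

definition densely_defined :: "('a::topological_space, 'b) lop \<Rightarrow> bool" where
  "densely_defined G \<longleftrightarrow> closure (op_dom G) = UNIV"

definition closed_operator :: "('a::real_normed_vector, 'b::real_normed_vector) lop \<Rightarrow> bool" where
  "closed_operator G \<longleftrightarrow> is_operator G \<and> closed G"

definition perp :: "'a::real_inner set \<Rightarrow> 'a set" where
  "perp S = {y. \<forall>x\<in>S. inner x y = 0}"

definition adj :: "('a::real_inner, 'b::real_inner) lop \<Rightarrow> ('b, 'a) lop" where
  "adj G = {(y, z). \<forall>(x, w)\<in>G. inner w y = inner x z}"

definition op_comp :: "('b, 'c) lop \<Rightarrow> ('a, 'b) lop \<Rightarrow> ('a, 'c) lop" where
  "op_comp B A = {(x, z). \<exists>y. (x, y) \<in> A \<and> (y, z) \<in> B}"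

definition id_op :: "('a, 'a) lop" where
  "id_op = {(x, x) | x. True}"

definition op_pow :: "('a, 'a) lop \<Rightarrow> nat \<Rightarrow> ('a, 'a) lop" where
  "op_pow T n = (op_comp T ^^ n) id_op"

definition mp_inv :: "('a::real_inner, 'b::real_inner) lop \<Rightarrow> ('b, 'a) lop" where
  "mp_inv A = {(y1 + y2, x) | x y1 y2.
      (x, y1) \<in> A \<and> x \<in> perp (op_null A) \<and> y2 \<in> perp (op_range A)}"

definition gen_cauchy_dual :: "('a::real_inner, 'b::real_inner) lop \<Rightarrow> ('a, 'b) lop" where
  "gen_cauchy_dual A = op_comp A (mp_inv (op_comp (adj A) A))"

definition is_EP :: "('a::real_inner, 'a) lop \<Rightarrow> bool" where
  "is_EP T \<longleftrightarrow> closed (op_range T) \<and> op_range T = op_range (adj T)"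

definition quasinormal :: "('a::real_inner, 'a) lop \<Rightarrow> bool" where
  "quasinormal T \<longleftrightarrow> op_comp T (op_comp (adj T) T) = op_comp (op_comp (adj T) T) T"

end

theory Submission imports Defs begin

lemma parallelogram_eq:
  fixes a b :: "'b::real_inner"
  shows "(norm (a + b))\<^sup>2 + (norm (a - b))\<^sup>2 = 2 * (norm a)\<^sup>2 + 2 * (norm b)\<^sup>2"
  by (simp add: power2_norm_eq_inner inner_add_left inner_add_right inner_diff_left inner_diff_right inner_commute)

lemma min_norm_orth:
  fixes x v :: "'b::real_inner"
  assumes "subspace V" "v \<in> V" "\<And>w. w \<in> V \<Longrightarrow> norm (x - v) \<le> norm (x - w)"
  shows "x - v \<in> perp V"
  unfolding perp_def
proof (clarify)
  fix w assume w: "w \<in> V"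
  show "inner w (x - v) = 0"
  proof (cases "w = 0")
    case True then show ?thesis by simp
  next
    case False
    define a where "a = inner w (x - v)"
    define t where "t = a / inner w w"
    have ww: "inner w w > 0" using False by simp
    have "v + t *\<^sub>R w \<in> V" using assms w by (simp add: subspace_add subspace_scale)
    then have "norm (x - v) \<le> norm (x - (v + t *\<^sub>R w))" using assms(3) by blast
    then have "(norm (x - v))\<^sup>2 \<le> (norm ((x - v) - t *\<^sub>R w))\<^sup>2"
      by (simp add: algebra_simps power_mono)
    also have "\<dots> = (norm (x - v))\<^sup>2 - 2 * t * a + t * t * inner w w"
      by (simp add: power2_norm_eq_inner inner_diff_left inner_diff_right a_def inner_commute algebra_simps)
    finally have "0 \<le> - 2 * t * a + t * t * inner w w" by simp
    also have "t * t * inner w w = t * a" using ww by (simp add: t_def)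
    finally have "0 \<le> - (a * a) / inner w w" by (simp add: t_def)
    then have "a * a \<le> 0" using ww by (simp add: divide_le_0_iff)
    then have "a = 0" using mult_le_0_iff[of a a] by linarith
    then show ?thesis unfolding a_def by simp
  qed
qed

lemma proj_exists:
  fixes V :: "'b::{real_inner,complete_space} set"
  assumes sV: "subspace V" and cV: "closed V"
  shows "\<exists>v\<in>V. x - v \<in> perp V"
proof -
  have ne: "V \<noteq> {}" using sV subspace_0 by blast
  define d where "d = infdist x V"
  have d0: "d \<ge> 0" unfolding d_def by (rule infdist_nonneg)
  have dle: "d \<le> norm (x - w)" if "w \<in> V" for w
    using infdist_le[OF that, of x] by (simp add: d_def dist_norm)
  have "\<exists>v\<in>V. norm (x - v) < d + 1 / real (Suc n)" for n
  proof -
    have "infdist x V < d + 1 / real (Suc n)" by (simp add: d_def)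
    moreover have "bdd_below ((\<lambda>v. norm (x - v)) ` V)" by (rule bdd_belowI[of _ 0]) auto
    ultimately show ?thesis using ne cINF_less_iff[of V "\<lambda>v. norm (x - v)"]
      by (simp add: infdist_notempty dist_norm)
  qed
  then obtain v where vV: "\<And>n. v n \<in> V" and vl: "\<And>n. norm (x - v n) < d + 1 / real (Suc n)"
    by metis
  have sq: "(norm (x - v n))\<^sup>2 - d\<^sup>2 \<le> (2 * d + 1) / real (Suc n)" for n
  proof -
    define e where "e = 1 / real (Suc n)"
    have e0: "0 < e" "e \<le> 1" by (auto simp: e_def)
    have a: "d \<le> norm (x - v n)" "norm (x - v n) < d + e" using dle[OF vV] vl e_def by auto
    have "(norm (x - v n))\<^sup>2 \<le> (d + e)\<^sup>2" using a d0 by (intro power_mono) auto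
    also have "\<dots> = d\<^sup>2 + e * (2 * d + e)" by (simp add: power2_eq_square algebra_simps)
    also have "\<dots> \<le> d\<^sup>2 + e * (2 * d + 1)" using e0 by (intro add_left_mono mult_left_mono) auto
    finally show ?thesis by (simp add: e_def)
  qed
  have pb: "(norm (v m - v n))\<^sup>2 \<le> 2 * ((2 * d + 1) / real (Suc m)) + 2 * ((2 * d + 1) / real (Suc n))" for m n
  proof -
    have mid: "(1/2) *\<^sub>R (v m + v n) \<in> V" using sV vV by (simp add: subspace_add subspace_scale)
    have "(x - v m) + (x - v n) = 2 *\<^sub>R (x - (1/2) *\<^sub>R (v m + v n))" by (simp add: algebra_simps scaleR_2)
    then have "norm ((x - v m) + (x - v n)) = 2 * norm (x - (1/2) *\<^sub>R (v m + v n))" by simp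
    then have "2 * d \<le> norm ((x - v m) + (x - v n))" using dle[OF mid] by simp
    then have h: "(2 * d)\<^sup>2 \<le> (norm ((x - v m) + (x - v n)))\<^sup>2" using d0 by (intro power_mono) auto
    have "(x - v m) - (x - v n) = v n - v m" by simp
    then have "(norm (v m - v n))\<^sup>2 = 2 * (norm (x - v m))\<^sup>2 + 2 * (norm (x - v n))\<^sup>2 - (norm ((x - v m) + (x - v n)))\<^sup>2"
      using parallelogram_eq[of "x - v m" "x - v n"] by (simp add: norm_minus_commute)
    also have "\<dots> \<le> 2 * (norm (x - v m))\<^sup>2 + 2 * (norm (x - v n))\<^sup>2 - 4 * d\<^sup>2"
      using h by (simp add: power2_eq_square)
    also have "\<dots> \<le> 2 * ((2 * d + 1) / real (Suc m)) + 2 * ((2 * d + 1) / real (Suc n))"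
      using sq[of m] sq[of n] by linarith
    finally show ?thesis .
  qed
  have "Cauchy v"
  proof (rule metric_CauchyI)
    fix e :: real assume e: "e > 0"
    define c where "c = 4 * (2 * d + 1)"
    have c0: "c > 0" using d0 by (simp add: c_def)
    obtain N where N: "c / (e * e) < real (Suc N)"
      using reals_Archimedean2 by (metis less_Suc_eq of_nat_Suc add.commute less_add_one order.strict_trans)
    have Nb: "c / real (Suc N) < e * e"
      using N e c0 by (simp add: field_simps)
    show "\<exists>M. \<forall>m\<ge>M. \<forall>n\<ge>M. dist (v m) (v n) < e"
    proof (intro exI allI impI)
      fix m n assume mn: "N \<le> m" "N \<le> n"
      have f: "(2 * d + 1) / real (Suc k) \<le> (2 * d + 1) / real (Suc N)" if "N \<le> k" for k
        using that d0 by (intro divide_left_mono) auto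
      have "(norm (v m - v n))\<^sup>2 \<le> c / real (Suc N)"
      proof -
        have "c / real (Suc N) = 4 * ((2 * d + 1) / real (Suc N))" by (simp add: c_def)
        then show ?thesis using pb[of m n] f[OF mn(1)] f[OF mn(2)] by linarith
      qed
      also have "\<dots> < e\<^sup>2" using Nb by (simp add: power2_eq_square)
      finally have "norm (v m - v n) < e" using e by (simp add: power_less_imp_less_base)
      then show "dist (v m) (v n) < e" by (simp add: dist_norm)
    qed
  qed
  then obtain l where l: "v \<longlonglongrightarrow> l" using Cauchy_convergent_iff convergent_def by blast
  have lV: "l \<in> V" using closed_sequentially[OF cV vV l] .
  have t1: "(\<lambda>n. norm (x - v n)) \<longlonglongrightarrow> norm (x - l)"
    by (intro tendsto_intros l)
  have t2: "(\<lambda>n. norm (x - v n)) \<longlonglongrightarrow> d"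
  proof (rule real_tendsto_sandwich[where f="\<lambda>n. d" and h="\<lambda>n. d + 1 / real (Suc n)"])
    show "\<forall>\<^sub>F n in sequentially. d \<le> norm (x - v n)" using dle[OF vV] by simp
    show "\<forall>\<^sub>F n in sequentially. norm (x - v n) \<le> d + 1 / real (Suc n)" using vl by (simp add: less_imp_le)
    show "(\<lambda>n. d) \<longlonglongrightarrow> d" by simp
    show "(\<lambda>n. d + 1 / real (Suc n)) \<longlonglongrightarrow> d"
      using tendsto_add[OF tendsto_const[of d] LIMSEQ_Suc[OF lim_inverse_n']] by (simp add: inverse_eq_divide)
  qed
  have "norm (x - l) = d" using LIMSEQ_unique[OF t1 t2] .
  then have "x - l \<in> perp V" using min_norm_orth[OF sV lV] dle by simp
  then show ?thesis using lV by blast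
qed

lemma op_comp_assoc: "op_comp C (op_comp B A) = op_comp (op_comp C B) A"
  unfolding op_comp_def by blast

lemma op_comp_id1: "op_comp A id_op = A" and op_comp_id2: "op_comp id_op A = A"
  unfolding op_comp_def id_op_def by auto

lemma op_pow_0: "op_pow T 0 = id_op" by (simp add: op_pow_def)
lemma op_pow_Suc: "op_pow T (Suc n) = op_comp T (op_pow T n)" by (simp add: op_pow_def)
lemma op_pow_Suc': "op_pow T (Suc n) = op_comp (op_pow T n) T"
proof (induction n)
  case 0 then show ?case by (simp add: op_pow_Suc op_pow_0 op_comp_id1 op_comp_id2)
next
  case (Suc n)
  have "op_pow T (Suc (Suc n)) = op_comp T (op_comp (op_pow T n) T)" using Suc by (simp add: op_pow_Suc)
  also have "\<dots> = op_comp (op_pow T (Suc n)) T" by (simp add: op_comp_assoc op_pow_Suc)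
  finally show ?case .
qed

lemma subspace_pairI:
  assumes "(0, 0) \<in> G" "\<And>a b c d. (a, b) \<in> G \<Longrightarrow> (c, d) \<in> G \<Longrightarrow> (a + c, b + d) \<in> G"
    "\<And>r a b. (a, b) \<in> G \<Longrightarrow> (r *\<^sub>R a, r *\<^sub>R b) \<in> G"
  shows "subspace G"
  unfolding subspace_def using assms by (auto simp: zero_prod_def)

lemma subspace_pairD:
  assumes "subspace G"
  shows "(0, 0) \<in> G" "(a, b) \<in> G \<Longrightarrow> (c, d) \<in> G \<Longrightarrow> (a + c, b + d) \<in> G"
    "(a, b) \<in> G \<Longrightarrow> (c, d) \<in> G \<Longrightarrow> (a - c, b - d) \<in> G"
    "(a, b) \<in> G \<Longrightarrow> (r *\<^sub>R a, r *\<^sub>R b) \<in> G"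
  using subspace_0[OF assms] subspace_add[OF assms, of "(a,b)" "(c,d)"]
    subspace_diff[OF assms, of "(a,b)" "(c,d)"] subspace_scale[OF assms, of "(a,b)" r]
  by (auto simp: zero_prod_def)

lemma subspace_op_comp:
  assumes "subspace A" "subspace B"
  shows "subspace (op_comp B A)"
proof (rule subspace_pairI)
  show "(0, 0) \<in> op_comp B A" unfolding op_comp_def using subspace_pairD(1)[OF assms(1)] subspace_pairD(1)[OF assms(2)] by auto
next
  fix a b c d assume "(a, b) \<in> op_comp B A" "(c, d) \<in> op_comp B A"
  then obtain y1 y2 where "(a, y1) \<in> A" "(y1, b) \<in> B" "(c, y2) \<in> A" "(y2, d) \<in> B" unfolding op_comp_def by auto
  then show "(a + c, b + d) \<in> op_comp B A" unfolding op_comp_def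
    using subspace_pairD(2)[OF assms(1)] subspace_pairD(2)[OF assms(2)] by blast
next
  fix r a b assume "(a, b) \<in> op_comp B A"
  then obtain y1 where "(a, y1) \<in> A" "(y1, b) \<in> B" unfolding op_comp_def by auto
  then show "(r *\<^sub>R a, r *\<^sub>R b) \<in> op_comp B A" unfolding op_comp_def
    using subspace_pairD(4)[OF assms(1)] subspace_pairD(4)[OF assms(2)] by blast
qed

lemma subspace_id_op: "subspace (id_op :: ('a::real_vector, 'a) lop)"
  by (rule subspace_pairI) (auto simp: id_op_def)

lemma subspace_adj: "subspace (adj G)"
proof (rule subspace_pairI)
  show "(0, 0) \<in> adj G" unfolding adj_def by auto
next
  fix a b c d assume "(a, b) \<in> adj G" "(c, d) \<in> adj G"
  then have "\<forall>(x, w)\<in>G. inner w a = inner x b" "\<forall>(x, w)\<in>G. inner w c = inner x d"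
    unfolding adj_def by auto
  then have "\<forall>(x, w)\<in>G. inner w (a + c) = inner x (b + d)"
    unfolding Ball_def case_prod_beta inner_add_right by simp
  then show "(a + c, b + d) \<in> adj G" unfolding adj_def by simp
next
  fix r a b assume "(a, b) \<in> adj G"
  then have "\<forall>(x, w)\<in>G. inner w a = inner x b" unfolding adj_def by auto
  then have "\<forall>(x, w)\<in>G. inner w (r *\<^sub>R a) = inner x (r *\<^sub>R b)"
    unfolding Ball_def case_prod_beta by simp
  then show "(r *\<^sub>R a, r *\<^sub>R b) \<in> adj G" unfolding adj_def by simp
qed

lemma is_operator_op_comp:
  assumes "is_operator A" "is_operator B"
  shows "is_operator (op_comp B A)"
proof -
  have sA: "subspace A" and sB: "subspace B" using assms unfolding is_operator_def by auto
  have vA: "\<And>x y z. (x, y) \<in> A \<Longrightarrow> (x, z) \<in> A \<Longrightarrow> y = z"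
    using assms(1) unfolding is_operator_def by blast
  have vB: "\<And>x y z. (x, y) \<in> B \<Longrightarrow> (x, z) \<in> B \<Longrightarrow> y = z"
    using assms(2) unfolding is_operator_def by blast
  have "subspace (op_comp B A)" using sA sB by (rule subspace_op_comp)
  moreover have "\<forall>x y z. (x, y) \<in> op_comp B A \<longrightarrow> (x, z) \<in> op_comp B A \<longrightarrow> y = z"
  proof (intro allI impI)
    fix x y z assume "(x, y) \<in> op_comp B A" "(x, z) \<in> op_comp B A"
    then obtain u v where 1: "(x, u) \<in> A" "(u, y) \<in> B" "(x, v) \<in> A" "(v, z) \<in> B"
      unfolding op_comp_def by auto
    then have "u = v" using vA by blast
    then show "y = z" using 1 vB by blast
  qed
  ultimately show ?thesis unfolding is_operator_def by blast
qed

lemma is_operator_id: "is_operator (id_op :: ('a::real_vector, 'a) lop)"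
  using subspace_id_op unfolding is_operator_def id_op_def by auto

lemma is_operator_pow: "is_operator T \<Longrightarrow> is_operator (op_pow T n)"
  by (induction n) (auto simp: op_pow_0 op_pow_Suc is_operator_id is_operator_op_comp)

lemma subspace_pow: "subspace T \<Longrightarrow> subspace (op_pow T n)"
  by (induction n) (auto simp: op_pow_0 op_pow_Suc subspace_id_op subspace_op_comp)

lemma adj_id: "adj (id_op :: ('a::real_inner, 'a) lop) = id_op"
proof -
  have "y = z" if "\<forall>x. inner x y = inner x z" for y z :: 'a
  proof -
    have "inner (y - z) (y - z) = 0" using that[rule_format, of "y - z"] by (simp add: inner_diff_right)
    then show ?thesis by simp
  qed
  then show ?thesis unfolding adj_def id_op_def by auto
qed

lemma mp_inv_id: "mp_inv (id_op :: ('a::real_inner, 'a) lop) = id_op"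
proof -
  have r: "op_range (id_op :: ('a, 'a) lop) = UNIV" unfolding op_range_def id_op_def by force
  have "perp (UNIV :: 'a set) = {0}"
  proof
    show "perp (UNIV :: 'a set) \<subseteq> {0}"
    proof
      fix y :: 'a assume "y \<in> perp UNIV"
      then have "inner y y = 0" unfolding perp_def by blast
      then show "y \<in> {0}" by simp
    qed
  qed (auto simp: perp_def)
  have n: "op_null (id_op :: ('a, 'a) lop) = {0}" unfolding op_null_def id_op_def by auto
  have p0: "perp {0::'a} = UNIV" unfolding perp_def by auto
  show ?thesis unfolding mp_inv_def r n p0 \<open>perp UNIV = {0}\<close> by (auto simp: id_op_def)
qed

lemma gcd_id: "gen_cauchy_dual (id_op :: ('a::real_inner, 'a) lop) = id_op"
  unfolding gen_cauchy_dual_def adj_id mp_inv_id op_comp_id1 by simp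


locale ep_setting =
  fixes T :: "('a::{real_inner,complete_space}, 'a) lop"
  assumes opT: "is_operator T" and clT: "closed T" and cR: "closed (op_range T)"
    and EP: "op_range T = op_range (adj T)"
begin

definition "M = op_range T"
definition "K = perp M"
definition "Pj x = (SOME m. m \<in> M \<and> x - m \<in> K)"

lemma sT: "subspace T" using opT unfolding is_operator_def by blast
lemma vT: "(x, y) \<in> T \<Longrightarrow> (x, z) \<in> T \<Longrightarrow> y = z" using opT unfolding is_operator_def by blast

lemma sM: "subspace M"
  unfolding subspace_def M_def op_range_def
proof (intro conjI ballI allI)
  show "0 \<in> snd ` T" using subspace_pairD(1)[OF sT] by force
next
  fix x y assume "x \<in> snd ` T" "y \<in> snd ` T"
  then obtain a b where "(a, x) \<in> T" "(b, y) \<in> T" by force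
  then have "(a + b, x + y) \<in> T" using subspace_pairD(2)[OF sT] by blast
  then show "x + y \<in> snd ` T" by force
next
  fix c x assume "x \<in> snd ` T"
  then obtain a where "(a, x) \<in> T" by force
  then have "(c *\<^sub>R a, c *\<^sub>R x) \<in> T" using subspace_pairD(4)[OF sT] by blast
  then show "c *\<^sub>R x \<in> snd ` T" by force
qed

lemma cM: "closed M" using cR by (simp add: M_def)

lemma Pj: "Pj x \<in> M" "x - Pj x \<in> K"
proof -
  have "\<exists>m. m \<in> M \<and> x - m \<in> K" using proj_exists[OF sM cM, of x] by (auto simp: K_def)
  then have "Pj x \<in> M \<and> x - Pj x \<in> K" unfolding Pj_def by (rule someI_ex)
  then show "Pj x \<in> M" "x - Pj x \<in> K" by auto
qed

lemma sK: "subspace K"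
  unfolding K_def perp_def subspace_def by (simp add: inner_add_right)

lemma MK0: "m \<in> M \<Longrightarrow> m \<in> K \<Longrightarrow> m = 0"
  unfolding K_def perp_def by auto

lemma Kperp: "k \<in> K \<Longrightarrow> m \<in> M \<Longrightarrow> inner m k = 0"
  unfolding K_def perp_def by auto

lemma perpK: "perp K \<subseteq> M"
proof
  fix x assume x: "x \<in> perp K"
  define k where "k = x - Pj x"
  have k: "k \<in> K" using Pj by (simp add: k_def)
  have "inner k x = 0" using x k unfolding perp_def by auto
  moreover have "inner k (Pj x) = 0" using Kperp[OF k Pj(1)] by (simp add: inner_commute)
  ultimately have "inner k k = 0" by (simp add: k_def inner_diff_right)
  then have "k = 0" by simp
  then show "x \<in> M" using Pj(1)[of x] by (simp add: k_def)
qed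

lemma Pj_M: "m \<in> M \<Longrightarrow> Pj m = m"
proof -
  assume m: "m \<in> M"
  have "m - Pj m \<in> M" using m Pj(1) sM by (simp add: subspace_diff)
  then show ?thesis using MK0 Pj(2) by fastforce
qed

lemma Pj_sum: "m \<in> M \<Longrightarrow> k \<in> K \<Longrightarrow> Pj (m + k) = m"
proof -
  assume m: "m \<in> M" and k: "k \<in> K"
  have "(m + k) - Pj (m + k) \<in> K" by (rule Pj(2))
  have "m - Pj (m + k) \<in> M" using m Pj(1) sM by (simp add: subspace_diff)
  moreover have "m - Pj (m + k) \<in> K"
  proof -
    have "m - Pj (m + k) = ((m + k) - Pj (m + k)) - k" by simp
    then show ?thesis using subspace_diff[OF sK Pj(2)[of "m + k"] k] by simp
  qed
  ultimately show ?thesis using MK0 by fastforce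
qed


lemma null_adj: "(y, 0) \<in> adj T \<longleftrightarrow> y \<in> K"
  unfolding adj_def K_def M_def perp_def op_range_def by auto

lemma null_T: "(x, 0) \<in> T \<longleftrightarrow> x \<in> K"
proof
  assume x: "(x, 0) \<in> T"
  show "x \<in> K" unfolding K_def perp_def
  proof (clarify)
    fix m assume "m \<in> M"
    then obtain y where "(y, m) \<in> adj T" using EP unfolding M_def op_range_def by auto
    then have "inner 0 y = inner x m" using x unfolding adj_def by auto
    then show "inner m x = 0" by (simp add: inner_commute)
  qed
next
  assume x: "x \<in> K"
  have cs: "closed T" by (rule clT)
  obtain g where g: "g \<in> T" "(x, 0) - g \<in> perp T" using proj_exists[OF sT cs, of "(x, 0)"] by blast
  obtain a ta where gat: "g = (a, ta)" by (cases g)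
  define b where "b = x - a"
  define c where "c = - ta"
  have orth: "inner u b + inner w c = 0" if "(u, w) \<in> T" for u w
    using g(2) that unfolding perp_def gat b_def c_def by auto
  have "(c, - b) \<in> adj T" unfolding adj_def using orth by (auto simp: inner_minus_right) (metis add_eq_0_iff)
  then have "- b \<in> M" using EP unfolding M_def op_range_def by force
  then have "b \<in> M" using sM by (metis minus_minus subspace_neg)
  then have bx: "inner b x = 0" using Kperp[OF x] by simp
  have "inner a b + inner ta c = 0" using orth g(1) gat by simp
  then have ab: "inner a b = inner ta ta" by (simp add: c_def)
  have "inner b b = inner b x - inner b a" by (simp add: b_def inner_diff_right)
  also have "\<dots> = - inner ta ta" using bx ab by (simp add: inner_commute)
  finally have "inner b b + inner ta ta = 0" by simp
  then have "inner b b = 0" "inner ta ta = 0" by (smt (verit) inner_ge_zero)+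
  then have "b = 0" "ta = 0" by auto
  then show "(x, 0) \<in> T" using g(1) gat by (simp add: b_def)
qed


lemma sA: "subspace (op_pow T n)" using subspace_pow[OF sT] .

lemma null_pow_sub: "(x, 0) \<in> op_pow T n \<Longrightarrow> x \<in> K"
proof (induction n arbitrary: x)
  case 0 then show ?case using subspace_0[OF sK] by (simp add: op_pow_0 id_op_def)
next
  case (Suc n)
  then obtain u where u: "(x, u) \<in> op_pow T n" "(u, 0) \<in> T" by (auto simp: op_pow_Suc op_comp_def)
  have uK: "u \<in> K" using u(2) null_T by blast
  show ?case
  proof (cases n)
    case 0 then show ?thesis using u uK by (simp add: op_pow_0 id_op_def)
  next
    case (Suc m)
    then obtain v where "(v, u) \<in> T" using u(1) by (auto simp: op_pow_Suc op_comp_def)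
    then have "u \<in> M" by (force simp: M_def op_range_def)
    then have "u = 0" using MK0 uK by blast
    then show ?thesis using Suc.IH u(1) by simp
  qed
qed

lemma null_pow: "n \<ge> 1 \<Longrightarrow> (x, 0) \<in> op_pow T n \<longleftrightarrow> x \<in> K"
proof
  assume "n \<ge> 1" "x \<in> K"
  then obtain m where n: "n = Suc m" by (cases n) auto
  have "(x, 0) \<in> T" using \<open>x \<in> K\<close> null_T by blast
  moreover have "(0, 0) \<in> op_pow T m" using subspace_pairD(1)[OF sA] .
  ultimately show "(x, 0) \<in> op_pow T n" by (auto simp: n op_pow_Suc' op_comp_def)
qed (rule null_pow_sub)

lemma range_pow_sub: "n \<ge> 1 \<Longrightarrow> (x, z) \<in> op_pow T n \<Longrightarrow> z \<in> M"
proof -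
  assume "n \<ge> 1" "(x, z) \<in> op_pow T n"
  then obtain m where "n = Suc m" by (cases n) auto
  then obtain y where "(y, z) \<in> T" using \<open>(x, z) \<in> op_pow T n\<close> by (auto simp: op_pow_Suc op_comp_def)
  then show "z \<in> M" unfolding M_def op_range_def by (metis snd_conv image_eqI)
qed

lemma range_pow_sup: "m \<in> M \<Longrightarrow> \<exists>x. (x, m) \<in> op_pow T n"
proof (induction n arbitrary: m)
  case 0 then show ?case by (auto simp: op_pow_0 id_op_def)
next
  case (Suc n)
  then obtain u where u: "(u, m) \<in> T" by (auto simp: M_def op_range_def)
  have h: "(u - Pj u, 0) \<in> T" using Pj(2) null_T by blast
  have "(Pj u, m) \<in> T" using subspace_pairD(3)[OF sT u h] by simp
  moreover obtain x where "(x, Pj u) \<in> op_pow T n" using Suc.IH Pj(1) by blast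
  ultimately show ?case by (auto simp: op_pow_Suc op_comp_def)
qed

lemma adjpow_sub: "op_pow (adj T) n \<subseteq> adj (op_pow T n)"
proof (induction n)
  case 0 then show ?case by (simp add: op_pow_0 adj_id)
next
  case (Suc n)
  show ?case
  proof
    fix p assume "p \<in> op_pow (adj T) (Suc n)"
    then obtain y z u where p: "p = (y, z)" "(y, u) \<in> adj T" "(u, z) \<in> op_pow (adj T) n"
      by (auto simp: op_pow_Suc' op_comp_def)
    have uz: "(u, z) \<in> adj (op_pow T n)" using Suc.IH p(3) by blast
    have "inner w y = inner x z" if xw: "(x, w) \<in> op_pow T (Suc n)" for x w
    proof -
      obtain v where v: "(x, v) \<in> op_pow T n" "(v, w) \<in> T" using xw by (auto simp: op_pow_Suc op_comp_def)
      have "inner w y = inner v u" using p(2) v(2) unfolding adj_def by auto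
      also have "\<dots> = inner x z" using uz v(1) unfolding adj_def by auto
      finally show ?thesis .
    qed
    then show "p \<in> adj (op_pow T (Suc n))" unfolding adj_def p by auto
  qed
qed

lemma adjpow_onto: "v \<in> M \<Longrightarrow> \<exists>z\<in>M. (z, v) \<in> op_pow (adj T) n"
proof (induction n arbitrary: v)
  case 0 then show ?case by (auto simp: op_pow_0 id_op_def)
next
  case (Suc n)
  then obtain u where u: "(u, v) \<in> adj T" using EP by (auto simp: M_def op_range_def)
  have h: "(u - Pj u, 0) \<in> adj T" using Pj(2) null_adj by blast
  have "(Pj u, v) \<in> adj T" using subspace_pairD(3)[OF subspace_adj u h] by simp
  moreover obtain z where "z \<in> M" "(z, Pj u) \<in> op_pow (adj T) n" using Suc.IH Pj(1) by blast
  ultimately show ?case by (auto simp: op_pow_Suc op_comp_def)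
qed

lemma null_adj_gen: "(y, 0) \<in> adj A \<longleftrightarrow> y \<in> perp (op_range A)"
  unfolding adj_def perp_def op_range_def by auto

lemma range_adj_gen: "(y, z) \<in> adj A \<Longrightarrow> (x, 0) \<in> A \<Longrightarrow> inner x z = 0"
  unfolding adj_def by auto

lemma adj_pow_char:
  assumes "n \<ge> 1" "z \<in> M" "v \<in> M"
  shows "(z, v) \<in> adj (op_pow T n) \<longleftrightarrow> (z, v) \<in> op_pow (adj T) n"
proof
  assume zv: "(z, v) \<in> adj (op_pow T n)"
  obtain z' where z': "z' \<in> M" "(z', v) \<in> op_pow (adj T) n" using adjpow_onto[OF assms(3)] by blast
  then have h: "(z', v) \<in> adj (op_pow T n)" using adjpow_sub by blast
  have "(z - z', 0) \<in> adj (op_pow T n)" using subspace_pairD(3)[OF subspace_adj zv h] by simp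
  then have "z - z' \<in> perp (op_range (op_pow T n))" using null_adj_gen by blast
  moreover have "M \<subseteq> op_range (op_pow T n)" using range_pow_sup by (force simp: op_range_def)
  ultimately have "z - z' \<in> K" unfolding K_def perp_def by blast
  moreover have "z - z' \<in> M" using assms(2) z'(1) sM by (simp add: subspace_diff)
  ultimately have "z = z'" using MK0 by fastforce
  then show "(z, v) \<in> op_pow (adj T) n" using z' by simp
qed (use adjpow_sub in blast)


lemma perpK_eq: "perp K = M"
proof
  show "M \<subseteq> perp K"
  proof
    fix x assume "x \<in> M"
    then have "\<forall>k\<in>K. inner k x = 0" using Kperp by (simp add: inner_commute)
    then show "x \<in> perp K" unfolding perp_def by simp
  qed
qed (rule perpK)

lemma w_char:
  assumes opA: "is_operator A" and rA: "op_range A = M" and nA: "\<And>x. (x, 0) \<in> A \<longleftrightarrow> x \<in> K"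
    and rAd: "op_range (adj A) = M"
  shows "gen_cauchy_dual A = {(y, z). z \<in> M \<and> (z, Pj y) \<in> adj A}"
proof -
  define Q where "Q = op_comp (adj A) A"
  have sAA: "subspace A" and vA: "\<And>x y z. (x, y) \<in> A \<Longrightarrow> (x, z) \<in> A \<Longrightarrow> y = z"
    using opA unfolding is_operator_def by blast+
  have nAd: "(y, 0) \<in> adj A \<longleftrightarrow> y \<in> K" for y
    using null_adj_gen[of y A] rA by (simp add: K_def)
  have nQ: "op_null Q = K"
  proof
    show "op_null Q \<subseteq> K"
    proof
      fix x assume "x \<in> op_null Q"
      then obtain u where u: "(x, u) \<in> A" "(u, 0) \<in> adj A" by (auto simp: op_null_def Q_def op_comp_def)
      have "u \<in> K" using u(2) nAd by blast
      moreover have "u \<in> M" using u(1) rA by (force simp: op_range_def)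
      ultimately have "u = 0" using MK0 by blast
      then show "x \<in> K" using u(1) nA by simp
    qed
  next
    show "K \<subseteq> op_null Q"
    proof
      fix x assume "x \<in> K"
      then have "(x, 0) \<in> A" using nA by blast
      moreover have "(0, 0) \<in> adj A" using subspace_pairD(1)[OF subspace_adj] .
      ultimately show "x \<in> op_null Q" by (auto simp: op_null_def Q_def op_comp_def)
    qed
  qed
  have rQ: "op_range Q = M"
  proof
    show "op_range Q \<subseteq> M" using rAd by (force simp: op_range_def Q_def op_comp_def)
  next
    show "M \<subseteq> op_range Q"
    proof
      fix v assume "v \<in> M"
      then obtain y where y: "(y, v) \<in> adj A" using rAd by (force simp: op_range_def)
      have h: "(y - Pj y, 0) \<in> adj A" using nAd Pj(2) by blast
      have yv: "(Pj y, v) \<in> adj A" using subspace_pairD(3)[OF subspace_adj y h] by simp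
      obtain x where "(x, Pj y) \<in> A" using Pj(1)[of y] rA by (force simp: op_range_def)
      then have "(x, v) \<in> Q" using yv by (auto simp: Q_def op_comp_def)
      then show "v \<in> op_range Q" by (force simp: op_range_def)
    qed
  qed
  have mpQ: "mp_inv Q = {(y1 + y2, x) | x y1 y2. (x, y1) \<in> Q \<and> x \<in> M \<and> y2 \<in> K}"
    unfolding mp_inv_def nQ rQ perpK_eq by (simp add: K_def)
  have gQ: "gen_cauchy_dual A = op_comp A (mp_inv Q)" by (simp add: gen_cauchy_dual_def Q_def)
  show ?thesis
  proof (intro equalityI subsetI)
    fix p assume "p \<in> gen_cauchy_dual A"
    then obtain y w x where p: "p = (y, w)" "(y, x) \<in> mp_inv Q" "(x, w) \<in> A"
      unfolding gQ op_comp_def by auto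
    then obtain y1 y2 u where q: "y = y1 + y2" "(x, u) \<in> A" "(u, y1) \<in> adj A" "x \<in> M" "y2 \<in> K"
      unfolding mpQ by (auto simp: Q_def op_comp_def)
    have "u = w" using vA q(2) p(3) by blast
    moreover have "w \<in> M" using p(3) rA by (force simp: op_range_def)
    moreover have "y1 \<in> M" using q(3) rAd by (force simp: op_range_def)
    ultimately show "p \<in> {(y, z). z \<in> M \<and> (z, Pj y) \<in> adj A}"
      using p q Pj_sum by auto
  next
    fix p assume "p \<in> {(y, z). z \<in> M \<and> (z, Pj y) \<in> adj A}"
    then obtain y z where p: "p = (y, z)" "z \<in> M" "(z, Pj y) \<in> adj A" by auto
    obtain x where x: "(x, z) \<in> A" using p(2) rA by (force simp: op_range_def)
    have h: "(x - Pj x, 0) \<in> A" using nA Pj(2) by blast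
    have xz: "(Pj x, z) \<in> A" using subspace_pairD(3)[OF sAA x h] by simp
    have "(Pj x, Pj y) \<in> Q" using xz p(3) by (auto simp: Q_def op_comp_def)
    then have "(Pj y + (y - Pj y), Pj x) \<in> mp_inv Q" unfolding mpQ using Pj by blast
    then have "(y, Pj x) \<in> mp_inv Q" by simp
    then show "p \<in> gen_cauchy_dual A" unfolding gQ op_comp_def
      using p(1) xz by auto
  qed
qed


lemma pow1: "op_pow G (Suc 0) = G" by (simp add: op_pow_Suc op_pow_0 op_comp_id1)

lemma wA:
  assumes n: "n \<ge> 1"
  shows "gen_cauchy_dual (op_pow T n) = {(y, z). z \<in> M \<and> (z, Pj y) \<in> op_pow (adj T) n}"
proof -
  have rA: "op_range (op_pow T n) = M"
    using range_pow_sub[OF n] range_pow_sup unfolding op_range_def by force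
  have rAd: "op_range (adj (op_pow T n)) = M"
  proof
    show "op_range (adj (op_pow T n)) \<subseteq> M"
    proof
      fix z assume "z \<in> op_range (adj (op_pow T n))"
      then obtain y where y: "(y, z) \<in> adj (op_pow T n)" by (auto simp: op_range_def)
      have "\<forall>x\<in>K. inner x z = 0" using range_adj_gen[OF y] null_pow[OF n] by blast
      then show "z \<in> M" using perpK_eq unfolding perp_def by blast
    qed
  next
    show "M \<subseteq> op_range (adj (op_pow T n))"
      using adjpow_onto adjpow_sub unfolding op_range_def by force
  qed
  have "gen_cauchy_dual (op_pow T n) = {(y, z). z \<in> M \<and> (z, Pj y) \<in> adj (op_pow T n)}"
    by (rule w_char[OF is_operator_pow[OF opT] rA null_pow[OF n] rAd])
  also have "\<dots> = {(y, z). z \<in> M \<and> (z, Pj y) \<in> op_pow (adj T) n}"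
    using adj_pow_char[OF n _ Pj(1)] by blast
  finally show ?thesis .
qed

lemma W1: "gen_cauchy_dual T = {(y, z). z \<in> M \<and> (z, Pj y) \<in> adj T}"
  using wA[of "Suc 0"] by (simp add: pow1)

lemma Wpow: "op_pow (gen_cauchy_dual T) (Suc m) = {(y, z). z \<in> M \<and> (z, Pj y) \<in> op_pow (adj T) (Suc m)}"
proof (induction m)
  case 0 then show ?case using W1 by (simp add: pow1)
next
  case (Suc m)
  show ?case
  proof (intro equalityI subsetI)
    fix p assume "p \<in> op_pow (gen_cauchy_dual T) (Suc (Suc m))"
    then obtain y u z where p: "p = (y, z)" "(y, u) \<in> op_pow (gen_cauchy_dual T) (Suc m)"
      "(u, z) \<in> gen_cauchy_dual T"
      by (auto simp: op_pow_Suc[of _ "Suc m"] op_comp_def)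
    have u: "u \<in> M" "(u, Pj y) \<in> op_pow (adj T) (Suc m)" using p(2) Suc.IH by auto
    have z: "z \<in> M" "(z, u) \<in> adj T" using p(3) W1 Pj_M[OF u(1)] by auto
    show "p \<in> {(y, z). z \<in> M \<and> (z, Pj y) \<in> op_pow (adj T) (Suc (Suc m))}"
      using p(1) u z by (auto simp: op_pow_Suc'[of _ "Suc m"] op_comp_def)
  next
    fix p assume "p \<in> {(y, z). z \<in> M \<and> (z, Pj y) \<in> op_pow (adj T) (Suc (Suc m))}"
    then obtain y z u where p: "p = (y, z)" "z \<in> M" "(z, u) \<in> adj T" "(u, Pj y) \<in> op_pow (adj T) (Suc m)"
      by (auto simp: op_pow_Suc'[of _ "Suc m"] op_comp_def)
    have uM: "u \<in> M" using p(3) EP by (force simp: M_def op_range_def)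
    have "(y, u) \<in> op_pow (gen_cauchy_dual T) (Suc m)" using Suc.IH uM p(4) by auto
    moreover have "(u, z) \<in> gen_cauchy_dual T" using W1 p Pj_M[OF uM] by auto
    ultimately show "p \<in> op_pow (gen_cauchy_dual T) (Suc (Suc m))"
      using p(1) by (auto simp: op_pow_Suc[of _ "Suc m"] op_comp_def)
  qed
qed

lemma main: "gen_cauchy_dual (op_pow T n) = op_pow (gen_cauchy_dual T) n"
proof (cases n)
  case 0 then show ?thesis by (simp add: op_pow_0 gcd_id)
next
  case (Suc m) then show ?thesis using wA[of n] Wpow[of m] by simp
qed

end

theorem theorem2p18:
  fixes T :: "('a::{real_inner, complete_space}, 'a) lop"
  assumes "closed_operator T" and "densely_defined T"
    and "quasinormal T" and "is_EP T"
  shows "gen_cauchy_dual (op_pow T n) = op_pow (gen_cauchy_dual T) n"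
proof -
  interpret ep_setting T
    using assms(1,4) unfolding closed_operator_def is_EP_def by unfold_locales auto
  show ?thesis by (rule main)
qed

end
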